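(* Let $a,b$ be distinct real numbers, let $x_0\in\mathbb{R}$, and let $(\lambda_n)_{n\in\mathbb{N}}$ be a sequence with $\lambda_n\in\,]1,2[$ for all $n$, $\lambda_n\to 2$, and $\sum_{n}(2-\lambda_n)<+\infty$. Define the sequence $(x_n)_{n\in\mathbb{N}}$ of alternating relaxed projections onto $\{a\}$ and $\{b\}$ by \[ x_{2n+1}:=(1-\lambda_{2n})x_{2n}+\lambda_{2n}a,\qquad x_{2n+2}:=(1-\lambda_{2n+1})x_{2n+1}+\lambda_{2n+1}b . \] Then $x_{2n}\to \operatorname{sign}(b-a)\,\infty$ and $x_{2n+1}\to\operatorname{sign}(a-b)\,\infty$; in particular $|x_n|\to+\infty$. *)

theory Defs
  imports "HOL-Analysis.Analysis"
begin

end

theory Submission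
  imports Defs
begin

lemma core:
  fixes a b :: real and lam x :: "nat \<Rightarrow> real"
  assumes ab: "a < b"
    and lb: "\<And>n. 1 < lam n \<and> lam n < 2"
    and sm: "summable (\<lambda>n. 2 - lam n)"
    and r1: "\<And>n. x (2*n+1) = (1 - lam (2*n)) * x (2*n) + lam (2*n) * a"
    and r2: "\<And>n. x (2*n+2) = (1 - lam (2*n+1)) * x (2*n+1) + lam (2*n+1) * b"
  shows "filterlim (\<lambda>n. x (2*n)) at_top sequentially
       \<and> filterlim (\<lambda>n. x (2*n+1)) at_bot sequentially"
proof -
  define t where "t n = 2 - lam n" for n
  define d where "d = b - a"
  define e where "e n = x (2*n) - a" for n
  define c where "c n = (lam (2*n+1) - 1) * (lam (2*n) - 1)" for n
  have d0: "d > 0" using ab d_def by simp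
  have t0: "0 < t n \<and> t n < 1" for n using lb[of n] t_def by auto
  have c01: "0 < c n \<and> c n \<le> 1" for n
  proof -
    have "0 < lam (2*n+1) - 1" "lam (2*n+1) - 1 \<le> 1" "0 < lam (2*n) - 1" "lam (2*n) - 1 \<le> 1"
      using lb[of "2*n"] lb[of "2*n+1"] by auto
    then show ?thesis unfolding c_def by (simp add: mult_le_one)
  qed
  have ct: "1 - c n \<le> t (2*n) + t (2*n+1)" for n
  proof -
    have "1 - c n = t (2*n) + t (2*n+1) - t (2*n) * t (2*n+1)"
      unfolding c_def t_def by (simp add: algebra_simps)
    moreover have "t (2*n) * t (2*n+1) \<ge> 0" using t0[of "2*n"] t0[of "2*n+1"] by simp
    ultimately show ?thesis by linarith
  qed
  have rec: "e (Suc n) = c n * e n + lam (2*n+1) * d" for n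
  proof -
    have "x (2 * Suc n) = x (2*n+2)" by simp
    also have "\<dots> = (1 - lam (2*n+1)) * ((1 - lam (2*n)) * x (2*n) + lam (2*n) * a) + lam (2*n+1) * b"
      using r1 r2 by simp
    finally show ?thesis unfolding e_def c_def d_def by (simp add: algebra_simps)
  qed
  have "t = (\<lambda>n. 2 - lam n)" using t_def by auto
  then have "summable t" using sm by simp
  then obtain N0 where N0: "\<And>m n. m \<ge> N0 \<Longrightarrow> norm (sum t {m..<n}) < 1/2"
  proof -
    have "\<forall>e>0. \<exists>N. \<forall>m\<ge>N. \<forall>n. norm (sum t {m..<n}) < e"
      using \<open>summable t\<close> unfolding summable_Cauchy .
    then have "\<exists>N. \<forall>m\<ge>N. \<forall>n. norm (sum t {m..<n}) < (1/2::real)"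
      by (rule allE[where x="1/2::real"]) (auto intro!: always_eventually)
    then show ?thesis using that by blast
  qed
  define N where "N = N0"
  define s where "s m = (\<Sum>k<m. 1 - c (N+k))" for m
  have sumeq: "(\<Sum>k<m. t (2*(N+k)) + t (2*(N+k)+1)) = sum t {2*N..<2*N+2*m}" for m
  proof (induction m)
    case 0 then show ?case by simp
  next
    case (Suc m)
    have "sum t {2*N..<2*N+2*Suc m} = sum t {2*N..<2*N+2*m} + t (2*N+2*m) + t (2*N+2*m+1)"
      by (simp add: algebra_simps)
    then show ?case using Suc by (simp add: algebra_simps)
  qed
  have s_le: "s m \<le> 1/2" for m
  proof -
    have "s m \<le> (\<Sum>k<m. t (2*(N+k)) + t (2*(N+k)+1))"
      unfolding s_def by (rule sum_mono) (use ct in blast)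
    also have "\<dots> = sum t {2*N..<2*N+2*m}" by (rule sumeq)
    also have "\<dots> \<le> norm (sum t {2*N..<2*N+2*m})" by simp
    also have "\<dots> < 1/2" using N0[of "2*N"] N_def by simp
    finally show ?thesis by simp
  qed
  have s_ge: "s m \<ge> 0" for m unfolding s_def using c01 by (simp add: sum_nonneg)
  define K where "K = \<bar>e N\<bar>"
  have inv: "e (N+m) \<ge> real m * d * (1 - s m) - K" for m
  proof (induction m)
    case 0 then show ?case unfolding K_def s_def by simp
  next
    case (Suc m)
    let ?c = "c (N+m)" and ?E = "e (N+m)" and ?s = "s m" and ?mu = "lam (2*(N+m)+1)"
    have cc: "0 < ?c" "?c \<le> 1" using c01 by auto
    have mu: "?mu \<ge> 1" using lb[of "2*(N+m)+1"] by simp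
    have sS: "s (Suc m) = ?s + (1 - ?c)" unfolding s_def by simp
    have "e (N + Suc m) = ?c * ?E + ?mu * d" using rec[of "N+m"] by simp
    also have "\<dots> \<ge> ?c * (real m * d * (1 - ?s) - K) + d"
    proof -
      have "?c * ?E \<ge> ?c * (real m * d * (1 - ?s) - K)"
        using Suc cc by (intro mult_left_mono) auto
      moreover have "?mu * d \<ge> d" using mu d0 by simp
      ultimately show ?thesis by linarith
    qed
    finally have A: "e (N + Suc m) \<ge> ?c * (real m * d * (1 - ?s) - K) + d" .
    have id: "?c * (real m * d * (1 - ?s) - K) + d - (real (Suc m) * d * (1 - s (Suc m)) - K)
       = real m * d * ?s * (1 - ?c) + d * (1 - ?c) + d * ?s + K * (1 - ?c)"
      unfolding sS by (simp add: algebra_simps)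
    have K0: "K \<ge> 0" unfolding K_def by simp
    have "real m * d * ?s * (1 - ?c) \<ge> 0" using d0 s_ge cc by simp
    moreover have "d * (1 - ?c) \<ge> 0" "d * ?s \<ge> 0" "K * (1 - ?c) \<ge> 0"
      using d0 s_ge cc K0 by auto
    ultimately show ?case using A id by linarith
  qed
  have low: "e (N+m) \<ge> real m * d / 2 - K" for m
  proof -
    have "real m * d * (1 - s m) \<ge> real m * d * (1/2)"
      using s_le[of m] d0 by (intro mult_left_mono) auto
    then show ?thesis using inv[of m] by simp
  qed
  have ev: "filterlim (\<lambda>n. x (2*n)) at_top sequentially"
    unfolding filterlim_at_top eventually_sequentially
  proof
    fix Z :: real
    define m0 where "m0 = nat \<lceil>2 * (\<bar>Z\<bar> + K + \<bar>a\<bar>) / d\<rceil>"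
    have "real m0 \<ge> 2 * (\<bar>Z\<bar> + K + \<bar>a\<bar>) / d" unfolding m0_def by linarith
    then have m0d: "real m0 * d \<ge> 2 * (\<bar>Z\<bar> + K + \<bar>a\<bar>)" using d0 by (simp add: field_simps)
    show "\<exists>M. \<forall>n\<ge>M. Z \<le> x (2*n)"
    proof (intro exI allI impI)
      fix n assume "N + m0 \<le> n"
      then obtain m where m: "n = N + m" "m \<ge> m0" by (metis le_add1 le_add_diff_inverse le_trans nat_add_left_cancel_le)
      have "real m * d \<ge> real m0 * d" using m d0 by (simp add: mult_right_mono)
      then have "e n \<ge> \<bar>Z\<bar> + \<bar>a\<bar>" using low[of m] m m0d by simp
      then show "Z \<le> x (2*n)" unfolding e_def by linarith
    qed
  qed
  have odd: "x (2*n+1) \<le> 2*b - x (2*(n+1))" if "x (2*(n+1)) \<ge> b" for n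
  proof (rule ccontr)
    assume "\<not> ?thesis"
    then have h: "x (2*n+1) - b > -(x (2*n+2) - b)" by simp
    have eq: "x (2*n+2) - b = (1 - lam (2*n+1)) * (x (2*n+1) - b)" using r2[of n] by (simp add: algebra_simps)
    have "(2 - lam (2*n+1)) * (x (2*n+1) - b) > 0" using h eq by (simp add: algebra_simps)
    then have "x (2*n+1) - b > 0" using lb[of "2*n+1"] by (simp add: zero_less_mult_iff)
    then have "(1 - lam (2*n+1)) * (x (2*n+1) - b) < 0" using lb[of "2*n+1"] by (simp add: mult_neg_pos)
    then show False using eq that by simp
  qed
  have "filterlim (\<lambda>n. x (2*n+1)) at_bot sequentially"
    unfolding filterlim_at_bot
  proof
    fix Z :: real
    have "eventually (\<lambda>n. x (2*(n+1)) \<ge> max b (2*b - Z)) sequentially"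
    proof -
      have "filterlim (\<lambda>n. x (2*(Suc n))) at_top sequentially"
        using ev filterlim_sequentially_Suc[of "\<lambda>n. x (2*n)"] by simp
      then have "\<forall>Z. eventually (\<lambda>n. Z \<le> x (2*(n+1))) sequentially"
        unfolding filterlim_at_top by simp
      then show ?thesis by blast
    qed
    then show "eventually (\<lambda>n. x (2*n+1) \<le> Z) sequentially"
    proof (rule eventually_mono)
      fix n assume "x (2*(n+1)) \<ge> max b (2*b - Z)"
      then show "x (2*n+1) \<le> Z" using odd[of n] by simp
    qed
  qed
  with ev show ?thesis by simp
qed

lemma abs_comb:
  fixes x :: "nat \<Rightarrow> real"
  assumes e: "filterlim (\<lambda>n. \<bar>x (2*n)\<bar>) at_top sequentially"
    and o: "filterlim (\<lambda>n. \<bar>x (2*n+1)\<bar>) at_top sequentially"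
  shows "filterlim (\<lambda>n. \<bar>x n\<bar>) at_top sequentially"
  unfolding filterlim_at_top eventually_sequentially
proof
  fix Z :: real
  obtain N1 where N1: "\<And>n. n \<ge> N1 \<Longrightarrow> Z \<le> \<bar>x (2*n)\<bar>"
    using e unfolding filterlim_at_top eventually_sequentially by blast
  obtain N2 where N2: "\<And>n. n \<ge> N2 \<Longrightarrow> Z \<le> \<bar>x (2*n+1)\<bar>"
    using o unfolding filterlim_at_top eventually_sequentially by blast
  show "\<exists>N. \<forall>n\<ge>N. Z \<le> \<bar>x n\<bar>"
  proof (intro exI allI impI)
    fix n assume n: "2 * (N1 + N2) \<le> n"
    have "n div 2 \<ge> N1" "n div 2 \<ge> N2" using n by auto
    show "Z \<le> \<bar>x n\<bar>"
    proof (cases "even n")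
      case True
      then have "n = 2 * (n div 2)" by simp
      then show ?thesis using N1[OF \<open>n div 2 \<ge> N1\<close>] by metis
    next
      case False
      then have "n = 2 * (n div 2) + 1" by simp
      then show ?thesis using N2[OF \<open>n div 2 \<ge> N2\<close>] by metis
    qed
  qed
qed

theorem mainTheorem4:
  fixes a b x0 :: real and lam x :: "nat \<Rightarrow> real"
  assumes "a \<noteq> b"
    and "\<And>n. 1 < lam n \<and> lam n < 2"
    and "lam \<longlonglongrightarrow> 2"
    and "summable (\<lambda>n. 2 - lam n)"
    and "x 0 = x0"
    and "\<And>n. x (2*n+1) = (1 - lam (2*n)) * x (2*n) + lam (2*n) * a"
    and "\<And>n. x (2*n+2) = (1 - lam (2*n+1)) * x (2*n+1) + lam (2*n+1) * b"
  shows "(if a < b then filterlim (\<lambda>n. x (2*n)) at_top sequentially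
                   else filterlim (\<lambda>n. x (2*n)) at_bot sequentially)
       \<and> (if b < a then filterlim (\<lambda>n. x (2*n+1)) at_top sequentially
                   else filterlim (\<lambda>n. x (2*n+1)) at_bot sequentially)
       \<and> filterlim (\<lambda>n. \<bar>x n\<bar>) at_top sequentially"
proof (cases "a < b")
  case True
  from core[OF True assms(2,4,6,7)]
  have E: "filterlim (\<lambda>n. x (2*n)) at_top sequentially"
   and O: "filterlim (\<lambda>n. x (2*n+1)) at_bot sequentially" by auto
  have "filterlim (\<lambda>n. \<bar>x (2*n)\<bar>) at_top sequentially"
    by (rule filterlim_at_top_mono[OF E]) (auto intro!: always_eventually)
  moreover have "filterlim (\<lambda>n. \<bar>x (2*n+1)\<bar>) at_top sequentially"
    by (rule filterlim_at_top_mono[OF O[unfolded filterlim_uminus_at_bot]]) (auto intro!: always_eventually)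
  ultimately show ?thesis using True E O abs_comb[of x] by auto
next
  case False
  then have lt: "-a < -b" using assms(1) by simp
  have h1: "\<And>n. - x (2*n+1) = (1 - lam (2*n)) * (- x (2*n)) + lam (2*n) * (-a)"
    using assms(6) by (simp add: algebra_simps)
  have h2: "\<And>n. - x (2*n+2) = (1 - lam (2*n+1)) * (- x (2*n+1)) + lam (2*n+1) * (-b)"
    using assms(7) by (simp add: algebra_simps)
  from core[OF lt assms(2,4), of "\<lambda>n. - x n", OF h1 h2]
  have E': "filterlim (\<lambda>n. - x (2*n)) at_top sequentially"
   and O': "filterlim (\<lambda>n. - x (2*n+1)) at_bot sequentially" by auto
  have E: "filterlim (\<lambda>n. x (2*n)) at_bot sequentially"
    using E' by (simp add: filterlim_uminus_at_bot)
  have O: "filterlim (\<lambda>n. x (2*n+1)) at_top sequentially"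
    using O' by (simp add: filterlim_uminus_at_top)
  have "filterlim (\<lambda>n. \<bar>x (2*n)\<bar>) at_top sequentially"
    by (rule filterlim_at_top_mono[OF E']) (auto intro!: always_eventually)
  moreover have "filterlim (\<lambda>n. \<bar>x (2*n+1)\<bar>) at_top sequentially"
    by (rule filterlim_at_top_mono[OF O]) (auto intro!: always_eventually)
  ultimately show ?thesis using False lt E O abs_comb[of x] by auto
qed

end
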